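(* Let $\mathbb{A}\in\mathbb{C}^{n\times n}$, $\mathbf{f}_1\in\mathbb{C}^n$, $\mathbf{f}_{i+1}=\mathbb{A}\mathbf{f}_i$ for $i=1,\dots,m$, and assume $\mathbf{X}_m=(\mathbf{f}_1,\dots,\mathbf{f}_m)$ has full column rank. Let $C_m$ be the companion matrix (ones on the first subdiagonal, last column $\mathbf{X}_m^\dagger\mathbf{f}_{m+1}$, zeros elsewhere), assume its eigenvalues $\lambda_1,\dots,\lambda_m$ are pairwise distinct, and let $\mathbb{V}_m=(\lambda_i^{j-1})_{i,j=1}^m$. Let $\mathbf{X}_m=U_m\Sigma_m\Phi_m^*$ be a thin SVD ($U_m\in\mathbb{C}^{n\times m}$ with orthonormal columns, $\Sigma_m$ positive diagonal, $\Phi_m$ unitary), let $S_m=U_m^*\mathbb{A}U_m$, and let $B_m=(b_1,\dots,b_m)$ with $S_mb_j=\lambda_jb_j$, $\|b_j\|_2=1$; set $Z_m=U_mB_m$. Then for each $j=1,\dots,m$, $$\mathfrak{a}_j:=\|\mathbf{X}_m\mathbb{V}_m^{-1}\mathbf{e}_j\|_2=\big|(Z_m^\dagger\mathbf{X}_m(:,1))_j\big|,$$ where $\mathbf{e}_j$ is the $j$-th canonical basis vector and $\mathbf{X}_m(:,1)=\mathbf{f}_1$.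
   Context: $\mathbf{X}_m^\dagger$, $Z_m^\dagger$ denote Moore–Penrose pseudoinverses. The matrix $Z_m$ is the matrix of DMD (Ritz) vectors produced by Schmid's DMD without truncation; $S_m$ equals $U_m^*(\mathbb{A}\mathbf{X}_m)\Phi_m\Sigma_m^{-1}$. *)

theory Defs
  imports Complex_Main "Jordan_Normal_Form.Schur_Decomposition" "Jordan_Normal_Form.DL_Rank"
          "Jordan_Normal_Form.Char_Poly"
begin

definition vnorm2 :: "complex vec \<Rightarrow> real" where
  "vnorm2 v = sqrt (\<Sum>i<dim_vec v. (cmod (v $ i))^2)"

definition penrose :: "complex mat \<Rightarrow> complex mat \<Rightarrow> bool" where
  "penrose A P \<longleftrightarrow> P \<in> carrier_mat (dim_col A) (dim_row A) \<and>
     A * P * A = A \<and> P * A * P = P \<and>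
     mat_adjoint (A * P) = A * P \<and> mat_adjoint (P * A) = P * A"

definition pinv :: "complex mat \<Rightarrow> complex mat" where
  "pinv A = (THE P. penrose A P)"

definition mat_inv :: "complex mat \<Rightarrow> complex mat" where
  "mat_inv A = (THE B. B \<in> carrier_mat (dim_row A) (dim_row A) \<and> inverts_mat A B \<and> inverts_mat B A)"

definition companion :: "nat \<Rightarrow> complex vec \<Rightarrow> complex mat" where
  "companion m c = mat m m (\<lambda>(i,j). if j = m - 1 then c $ i else if i = j + 1 then 1 else 0)"

text \<open>Vandermonde matrix (lambda_i^(j-1)), 0-indexed.\<close>
definition vandermonde :: "nat \<Rightarrow> (nat \<Rightarrow> complex) \<Rightarrow> complex mat" where
  "vandermonde m lam = mat m m (\<lambda>(i,j). lam i ^ j)"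

end

theory Submission
  imports Defs
begin


lemma adj_carrier[simp]: "mat_adjoint A \<in> carrier_mat (dim_col A) (dim_row A)"
  unfolding mat_adjoint_def by auto
lemma adj_dims[simp]: "dim_row (mat_adjoint A) = dim_col A" "dim_col (mat_adjoint A) = dim_row A"
  unfolding mat_adjoint_def by auto
lemma adj_index[simp]: "i < dim_col A \<Longrightarrow> j < dim_row A \<Longrightarrow> mat_adjoint A $$ (i,j) = cnj (A $$ (j,i))"
  unfolding mat_adjoint_def by (simp add: mat_of_rows_index)

lemma adj_adj[simp]: "mat_adjoint (mat_adjoint (A::complex mat)) = A"
  by (rule eq_matI, auto)

lemma adj_one[simp]: "mat_adjoint (1\<^sub>m n :: complex mat) = 1\<^sub>m n"
  by (rule eq_matI, auto)

lemma adj_mult: assumes "(A::complex mat) \<in> carrier_mat n k" "B \<in> carrier_mat k m"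
  shows "mat_adjoint (A * B) = mat_adjoint B * mat_adjoint A"
  using assms by (intro eq_matI) (auto simp: scalar_prod_def mult.commute)



lemma left_inv_penrose:
  assumes Z: "Z \<in> carrier_mat n m" and L: "L \<in> carrier_mat m n" and LZ: "L * Z = 1\<^sub>m m"
    and P: "penrose Z P"
  shows "P * Z = 1\<^sub>m m"
proof -
  have Pc: "P \<in> carrier_mat m n" using P Z unfolding penrose_def by auto
  have "Z * P * Z = Z" using P unfolding penrose_def by auto
  hence "L * (Z * P * Z) = L * Z" by simp
  also have "L * (Z * P * Z) = L * (Z * (P * Z))" using assoc_mult_mat[OF Z Pc Z] by simp
  also have "\<dots> = (L * Z) * (P * Z)" using assoc_mult_mat[OF L Z mult_carrier_mat[OF Pc Z]] by simp
  finally have "(L * Z) * (P * Z) = L * Z" .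
  thus ?thesis using LZ Pc Z by simp
qed

lemma pinv_unique:
  assumes Z: "Z \<in> carrier_mat n m" and L: "L \<in> carrier_mat m n" and LZ: "L * Z = 1\<^sub>m m"
    and Q: "penrose Z Q"
  shows "pinv Z = Q"
  unfolding pinv_def
proof (rule the_equality)
  show "penrose Z Q" by (rule Q)
next
  fix P assume P: "penrose Z P"
  have Pc: "P \<in> carrier_mat m n" using P Z unfolding penrose_def by auto
  have Qc: "Q \<in> carrier_mat m n" using Q Z unfolding penrose_def by auto
  have PZ: "P * Z = 1\<^sub>m m" by (rule left_inv_penrose[OF Z L LZ P])
  have QZ: "Q * Z = 1\<^sub>m m" by (rule left_inv_penrose[OF Z L LZ Q])
  have a1: "mat_adjoint (Z * P) = Z * P" "mat_adjoint (Z * Q) = Z * Q"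
    using P Q unfolding penrose_def by auto
  have ZQZ: "Z * Q * Z = Z" using Q unfolding penrose_def by auto
  have ZQ: "Z * Q \<in> carrier_mat n n" using Z Qc by simp
  have ZP: "Z * P \<in> carrier_mat n n" using Z Pc by simp
  have "Z * P = mat_adjoint (Z * P)" using a1 by simp
  also have "\<dots> = mat_adjoint (Z * Q * Z * P)" using ZQZ by simp
  also have "Z * Q * Z * P = (Z * Q) * (Z * P)" using assoc_mult_mat[OF ZQ Z Pc] by simp
  also have "mat_adjoint \<dots> = mat_adjoint (Z * P) * mat_adjoint (Z * Q)"
    by (rule adj_mult[OF ZQ ZP])
  also have "\<dots> = Z * P * (Z * Q)" using a1 by simp
  also have "\<dots> = Z * (P * (Z * Q))" using assoc_mult_mat[OF Z Pc ZQ] by simp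
  also have "P * (Z * Q) = (P * Z) * Q" using assoc_mult_mat[OF Pc Z Qc] by simp
  also have "\<dots> = Q" using PZ Qc by simp
  finally have ZPQ: "Z * P = Z * Q" .
  have "P = P * Z * P" using P unfolding penrose_def by auto
  also have "\<dots> = P * (Z * P)" using assoc_mult_mat[OF Pc Z Pc] by simp
  also have "\<dots> = P * (Z * Q)" using ZPQ by simp
  also have "\<dots> = (P * Z) * Q" using assoc_mult_mat[OF Pc Z Qc] by simp
  also have "\<dots> = Q" using PZ Qc by simp
  finally show "P = Q" .
qed



lemma vnorm2_sq: "complex_of_real ((vnorm2 v)^2) = v \<bullet>c v"
proof -
  have "(vnorm2 v)^2 = (\<Sum>i<dim_vec v. (cmod (v $ i))^2)"
    unfolding vnorm2_def by (auto intro: sum_nonneg)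
  hence "complex_of_real ((vnorm2 v)^2) = (\<Sum>i<dim_vec v. complex_of_real ((cmod (v $ i))^2))"
    by (simp only: of_real_sum)
  also have "\<dots> = (\<Sum>i<dim_vec v. v $ i * cnj (v $ i))"
    by (intro sum.cong refl) (rule complex_norm_square)
  also have "\<dots> = v \<bullet>c v" unfolding scalar_prod_def
    by (simp add: atLeast0LessThan)
  finally show ?thesis .
qed

lemma vnorm2_nonneg: "vnorm2 v \<ge> 0" unfolding vnorm2_def by (auto intro: sum_nonneg)

lemma vnorm2_eqI: assumes "v \<bullet>c v = w \<bullet>c w" shows "vnorm2 v = vnorm2 w"
proof -
  have "complex_of_real ((vnorm2 v)^2) = complex_of_real ((vnorm2 w)^2)"
    using assms vnorm2_sq by metis
  hence "(vnorm2 v)^2 = (vnorm2 w)^2" using of_real_eq_iff by blast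
  thus ?thesis using vnorm2_nonneg by (metis power2_eq_iff_nonneg)
qed

lemma adj_sprod:
  assumes U: "(U::complex mat) \<in> carrier_mat n m" and x: "x \<in> carrier_vec m" and y: "y \<in> carrier_vec n"
  shows "(U *\<^sub>v x) \<bullet>c y = x \<bullet>c (mat_adjoint U *\<^sub>v y)"
proof -
  have "(U *\<^sub>v x) \<bullet>c y = (\<Sum>i<n. (\<Sum>k<m. U $$ (i,k) * x $ k) * cnj (y $ i))"
    using U x y unfolding scalar_prod_def mult_mat_vec_def
    by (simp add: atLeast0LessThan row_def)
  also have "\<dots> = (\<Sum>k<m. x $ k * (\<Sum>i<n. U $$ (i,k) * cnj (y $ i)))"
    by (simp add: sum_distrib_left sum_distrib_right sum.swap[of _ "{..<n}"] mult_ac)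
  also have "\<dots> = x \<bullet>c (mat_adjoint U *\<^sub>v y)"
    using U x y unfolding scalar_prod_def mult_mat_vec_def
    by (simp add: atLeast0LessThan row_def mult_ac)
  finally show ?thesis .
qed

lemma vnorm2_isometry:
  assumes U: "(U::complex mat) \<in> carrier_mat n m" "mat_adjoint U * U = 1\<^sub>m m" and x: "x \<in> carrier_vec m"
  shows "vnorm2 (U *\<^sub>v x) = vnorm2 x"
proof (rule vnorm2_eqI)
  have "(U *\<^sub>v x) \<bullet>c (U *\<^sub>v x) = x \<bullet>c (mat_adjoint U *\<^sub>v (U *\<^sub>v x))"
    using adj_sprod[OF U(1) x, of "U *\<^sub>v x"] U x by simp
  also have "mat_adjoint U *\<^sub>v (U *\<^sub>v x) = (mat_adjoint U * U) *\<^sub>v x"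
    using U x by (metis adj_carrier carrier_matD(1) carrier_matD(2) assoc_mult_mat_vec)
  finally show "(U *\<^sub>v x) \<bullet>c (U *\<^sub>v x) = x \<bullet>c x" using U x by simp
qed

lemma vnorm2_smult: "vnorm2 (c \<cdot>\<^sub>v v) = cmod c * vnorm2 v"
proof -
  have "vnorm2 (c \<cdot>\<^sub>v v) = sqrt ((cmod c)^2 * (\<Sum>i<dim_vec v. (cmod (v $ i))^2))"
    unfolding vnorm2_def by (simp add: norm_mult power_mult_distrib sum_distrib_left)
  also have "\<dots> = cmod c * vnorm2 v" unfolding vnorm2_def by (simp add: real_sqrt_mult)
  finally show ?thesis .
qed



lemma mat_inv_eq:
  assumes V: "V \<in> carrier_mat m m" and Y: "Y \<in> carrier_mat m m"
    and VY: "V * Y = 1\<^sub>m m" and YV: "Y * V = 1\<^sub>m m"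
  shows "mat_inv V = Y"
  unfolding mat_inv_def
proof (rule the_equality)
  show "Y \<in> carrier_mat (dim_row V) (dim_row V) \<and> inverts_mat V Y \<and> inverts_mat Y V"
    using V Y VY YV unfolding inverts_mat_def by auto
next
  fix B assume B: "B \<in> carrier_mat (dim_row V) (dim_row V) \<and> inverts_mat V B \<and> inverts_mat B V"
  hence Bc: "B \<in> carrier_mat m m" and BV: "B * V = 1\<^sub>m m" using V unfolding inverts_mat_def by auto
  have "B = B * (V * Y)" using VY Bc by simp
  also have "\<dots> = (B * V) * Y" using assoc_mult_mat[OF Bc V Y] by simp
  also have "\<dots> = Y" using BV Y by simp
  finally show "B = Y" .
qed

lemma vandermonde_carrier[simp]: "vandermonde m lam \<in> carrier_mat m m"
  unfolding vandermonde_def by simp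

lemma vandermonde_inj:
  assumes inj: "inj_on lam {..<m}" and w: "w \<in> carrier_vec m"
    and Vw: "vandermonde m lam *\<^sub>v w = 0\<^sub>v m"
  shows "w = 0\<^sub>v m"
proof -
  define p where "p = (\<Sum>k<m. monom (w $ k) k)"
  have cp: "coeff p i = (if i < m then w $ i else 0)" for i
    unfolding p_def by (simp add: coeff_sum coeff_monom)
  have pl: "poly p x = (\<Sum>k<m. w $ k * x ^ k)" for x
    unfolding p_def by (simp add: poly_sum poly_monom)
  have roots: "poly p (lam i) = 0" if i: "i < m" for i
  proof -
    have "(vandermonde m lam *\<^sub>v w) $ i = 0" using Vw i by simp
    hence "(\<Sum>k<m. lam i ^ k * w $ k) = 0"
      using i w unfolding vandermonde_def mult_mat_vec_def scalar_prod_def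
      by (simp add: atLeast0LessThan row_def)
    thus ?thesis unfolding pl by (simp add: mult.commute)
  qed
  have "p = 0"
  proof (rule ccontr)
    assume p0: "p \<noteq> 0"
    have m0: "m > 0"
    proof (rule ccontr)
      assume "\<not> 0 < m"
      hence "p = 0" using cp by (intro poly_eqI) auto
      thus False using p0 by simp
    qed
    have deg: "degree p \<le> m - 1"
      by (rule degree_le) (use cp in auto)
    have "lam ` {..<m} \<subseteq> {x. poly p x = 0}" using roots by auto
    hence "card (lam ` {..<m}) \<le> card {x. poly p x = 0}"
      using poly_roots_finite[OF p0] by (rule card_mono[rotated])
    also have "\<dots> \<le> degree p" by (rule card_poly_roots_bound[OF p0])
    finally have "m \<le> degree p" using card_image[OF inj] by simp
    thus False using deg m0 by simp
  qed
  show ?thesis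
  proof (rule eq_vecI)
    fix i assume "i < dim_vec (0\<^sub>v m :: complex vec)"
    hence "i < m" by simp
    thus "w $ i = 0\<^sub>v m $ i" using cp[of i] \<open>p = 0\<close> by simp
  qed (use w in simp)
qed

lemma vandermonde_invertible:
  assumes inj: "inj_on lam {..<m}"
  shows "\<exists>Y. Y \<in> carrier_mat m m \<and> vandermonde m lam * Y = 1\<^sub>m m \<and> Y * vandermonde m lam = 1\<^sub>m m"
proof -
  let ?V = "vandermonde m lam"
  have "det ?V \<noteq> 0"
    using det_0_iff_vec_prod_zero[OF vandermonde_carrier[of m lam]] vandermonde_inj[OF inj] by blast
  from det_non_zero_imp_unit[OF vandermonde_carrier this, of "()"]
  show ?thesis unfolding Units_def ring_mat_def by auto
qed



lemma companion_carrier[simp]: "companion m c \<in> carrier_mat m m"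
  unfolding companion_def by simp

lemma companion_mult_vec:
  assumes i: "i < Suc m'" and x: "x \<in> carrier_vec (Suc m')"
  shows "(companion (Suc m') c *\<^sub>v x) $ i = c $ i * x $ m' + (if i = 0 then 0 else x $ (i - 1))"
proof -
  have "(companion (Suc m') c *\<^sub>v x) $ i
     = (\<Sum>k<Suc m'. (if k = m' then c $ i else if i = k + 1 then 1 else 0) * x $ k)"
    using i x unfolding companion_def mult_mat_vec_def scalar_prod_def
    by (simp add: atLeast0LessThan row_def)
  also have "\<dots> = (\<Sum>k<m'. (if k = i - 1 \<and> i \<noteq> 0 then x $ k else 0)) + c $ i * x $ m'"
    by (simp add: sum.lessThan_Suc, intro sum.cong refl) auto
  also have "(\<Sum>k<m'. (if k = i - 1 \<and> i \<noteq> 0 then x $ k else 0)) = (if i = 0 then 0 else x $ (i - 1))"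
    using i by (cases "i = 0") auto
  finally show ?thesis by simp
qed

lemma companion_eig_last:
  assumes v: "v \<in> carrier_vec (Suc m')" and ev: "companion (Suc m') c *\<^sub>v v = l \<cdot>\<^sub>v v"
    and last: "v $ m' = 0"
  shows "v = 0\<^sub>v (Suc m')"
proof -
  have step: "v $ (i - 1) = l * v $ i" if i1: "i < Suc m'" and i2: "i \<noteq> 0" for i
  proof -
    have "(companion (Suc m') c *\<^sub>v v) $ i = l * v $ i" unfolding ev using i1 v by simp
    moreover have "(companion (Suc m') c *\<^sub>v v) $ i = v $ (i - 1)"
      unfolding companion_mult_vec[OF i1 v] using last i2 by simp
    ultimately show ?thesis by simp
  qed
  have H: "v $ (m' - d) = 0" if "d \<le> m'" for d
    using that
  proof (induction d)
    case 0 then show ?case using last by simp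
  next
    case (Suc d)
    have a: "m' - d < Suc m'" "m' - d \<noteq> 0" using Suc.prems by auto
    have "v $ (m' - d - 1) = l * v $ (m' - d)" by (rule step[OF a])
    also have "\<dots> = 0" using Suc by simp
    also have "m' - d - 1 = m' - Suc d" by simp
    finally show ?case .
  qed
  have "v $ i = 0" if "i < Suc m'" for i using H[of "m' - i"] that by simp
  thus ?thesis using v by (intro eq_vecI) auto
qed

lemma companion_root:
  assumes ev: "eigenvalue (companion (Suc m') c) l"
  shows "(\<Sum>k<Suc m'. c $ k * l ^ k) = l ^ Suc m'"
proof -
  let ?C = "companion (Suc m') c"
  obtain v where v: "v \<in> carrier_vec (Suc m')" "v \<noteq> 0\<^sub>v (Suc m')" "?C *\<^sub>v v = l \<cdot>\<^sub>v v"
    using ev unfolding eigenvalue_def eigenvector_def using companion_carrier[of "Suc m'" c] by (metis carrier_matD(1))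
  have last: "v $ m' \<noteq> 0" using companion_eig_last[OF v(1) v(3)] v(2) by blast
  have "(\<Sum>i<Suc m'. l ^ i * (?C *\<^sub>v v) $ i) = (\<Sum>i<Suc m'. l ^ i * (l * v $ i))"
    using v by (intro sum.cong refl) auto
  also have "\<dots> = (\<Sum>i<m'. l ^ Suc i * v $ i) + l ^ Suc m' * v $ m'"
    by (simp add: sum.lessThan_Suc mult_ac)
  finally have e1: "(\<Sum>i<Suc m'. l ^ i * (?C *\<^sub>v v) $ i) = (\<Sum>i<m'. l ^ Suc i * v $ i) + l ^ Suc m' * v $ m'" .
  have "(\<Sum>i<Suc m'. l ^ i * (?C *\<^sub>v v) $ i)
     = (\<Sum>i<Suc m'. l ^ i * (c $ i * v $ m' + (if i = 0 then 0 else v $ (i - 1))))"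
    using v(1) by (intro sum.cong refl) (simp add: companion_mult_vec)
  also have "\<dots> = (\<Sum>i<Suc m'. c $ i * l ^ i) * v $ m' + (\<Sum>i<Suc m'. l ^ i * (if i = 0 then 0 else v $ (i - 1)))"
    by (simp add: distrib_left sum.distrib sum_distrib_right sum_distrib_left mult_ac)
  also have "(\<Sum>i<Suc m'. l ^ i * (if i = 0 then 0 else v $ (i - 1))) = (\<Sum>i<m'. l ^ Suc i * v $ i)"
    by (simp only: sum.lessThan_Suc_shift) simp
  finally have "(\<Sum>i<Suc m'. c $ i * l ^ i) * v $ m' = l ^ Suc m' * v $ m'" using e1 by simp
  thus ?thesis using last by simp
qed



lemma vandermonde_mult_vec:
  assumes i: "i < m" and x: "x \<in> carrier_vec m"
  shows "(vandermonde m lam *\<^sub>v x) $ i = (\<Sum>k<m. lam i ^ k * x $ k)"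
  using i x unfolding vandermonde_def mult_mat_vec_def scalar_prod_def
  by (simp add: atLeast0LessThan row_def)

lemma vandermonde_companion:
  assumes ev: "eigenvalue (companion (Suc m') c) (lam i)"
    and i: "i < Suc m'" and x: "x \<in> carrier_vec (Suc m')"
  shows "(vandermonde (Suc m') lam *\<^sub>v (companion (Suc m') c *\<^sub>v x)) $ i
       = lam i * (vandermonde (Suc m') lam *\<^sub>v x) $ i"
proof -
  let ?C = "companion (Suc m') c"
  let ?l = "lam i"
  have Cx: "?C *\<^sub>v x \<in> carrier_vec (Suc m')" using mult_mat_vec_carrier[OF companion_carrier x] .
  have "(vandermonde (Suc m') lam *\<^sub>v (?C *\<^sub>v x)) $ i = (\<Sum>k<Suc m'. ?l ^ k * (?C *\<^sub>v x) $ k)"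
    by (rule vandermonde_mult_vec[OF i Cx])
  also have "\<dots> = (\<Sum>k<Suc m'. ?l ^ k * (c $ k * x $ m' + (if k = 0 then 0 else x $ (k - 1))))"
    using x by (intro sum.cong refl) (simp add: companion_mult_vec)
  also have "\<dots> = (\<Sum>k<Suc m'. c $ k * ?l ^ k) * x $ m' + (\<Sum>k<Suc m'. ?l ^ k * (if k = 0 then 0 else x $ (k - 1)))"
    by (simp add: distrib_left sum.distrib sum_distrib_right sum_distrib_left mult_ac)
  also have "(\<Sum>k<Suc m'. ?l ^ k * (if k = 0 then 0 else x $ (k - 1))) = (\<Sum>k<m'. ?l ^ Suc k * x $ k)"
    by (simp only: sum.lessThan_Suc_shift) simp
  also have "(\<Sum>k<Suc m'. c $ k * ?l ^ k) = ?l ^ Suc m'" by (rule companion_root[OF ev])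
  also have "?l ^ Suc m' * x $ m' + (\<Sum>k<m'. ?l ^ Suc k * x $ k) = (\<Sum>k<Suc m'. ?l ^ Suc k * x $ k)"
    by (simp add: sum.lessThan_Suc)
  also have "\<dots> = ?l * (\<Sum>k<Suc m'. ?l ^ k * x $ k)"
    by (simp add: sum_distrib_left distrib_left mult_ac)
  also have "\<dots> = ?l * (vandermonde (Suc m') lam *\<^sub>v x) $ i"
    using vandermonde_mult_vec[OF i x] by simp
  finally show ?thesis .
qed



lemma mult_unit_vec: assumes "(X::complex mat) \<in> carrier_mat n m" "j < m"
  shows "X *\<^sub>v unit_vec m j = col X j"
  using assms by (intro eq_vecI) (auto simp: carrier_matD)

definition diagm :: "nat \<Rightarrow> (nat \<Rightarrow> complex) \<Rightarrow> complex mat" where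
  "diagm m d = mat m m (\<lambda>(i,j). if i = j then d i else 0)"

lemma diagm_carrier[simp]: "diagm m d \<in> carrier_mat m m" unfolding diagm_def by simp

lemma diagm_mult_vec: assumes "x \<in> carrier_vec m" "i < m"
  shows "(diagm m d *\<^sub>v x) $ i = d i * x $ i"
proof -
  have "(diagm m d *\<^sub>v x) $ i = (\<Sum>k<m. (if i = k then d i else 0) * x $ k)"
    using assms unfolding diagm_def mult_mat_vec_def scalar_prod_def
    by (simp add: atLeast0LessThan row_def)
  also have "\<dots> = (\<Sum>k<m. if k = i then d i * x $ i else 0)" by (intro sum.cong refl) auto
  also have "\<dots> = d i * x $ i" using assms(2) by simp
  finally show ?thesis .
qed

lemma diagm_mult: "diagm m d * diagm m e = diagm m (\<lambda>i. d i * e i)"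
proof (rule eq_matI)
  fix i j assume ij: "i < dim_row (diagm m (\<lambda>i. d i * e i))" "j < dim_col (diagm m (\<lambda>i. d i * e i))"
  hence i: "i < m" and j: "j < m" unfolding diagm_def by auto
  have "(diagm m d * diagm m e) $$ (i,j) = (\<Sum>k<m. (if i = k then d i else 0) * (if k = j then e k else 0))"
    using i j unfolding diagm_def times_mat_def scalar_prod_def
    by (simp add: atLeast0LessThan row_def col_def)
  also have "\<dots> = (\<Sum>k<m. if k = i then (if i = j then d i * e i else 0) else 0)" by (intro sum.cong refl) auto
  also have "\<dots> = (if i = j then d i * e i else 0)" using i by simp
  finally show "(diagm m d * diagm m e) $$ (i,j) = diagm m (\<lambda>i. d i * e i) $$ (i,j)"
    using i j unfolding diagm_def by simp
qed (auto simp: diagm_def)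

lemma diagm_one: "diagm m (\<lambda>_. 1) = 1\<^sub>m m"
  by (rule eq_matI) (auto simp: diagm_def)

lemma diagm_inv: assumes "\<And>i. i < m \<Longrightarrow> d i \<noteq> 0"
  shows "diagm m d * diagm m (\<lambda>i. 1 / d i) = 1\<^sub>m m" "diagm m (\<lambda>i. 1 / d i) * diagm m d = 1\<^sub>m m"
proof -
  have "diagm m (\<lambda>i. d i * (1 / d i)) = diagm m (\<lambda>_. 1)" "diagm m (\<lambda>i. (1 / d i) * d i) = diagm m (\<lambda>_. 1)"
    using assms by (auto intro!: eq_matI simp: diagm_def)
  thus "diagm m d * diagm m (\<lambda>i. 1 / d i) = 1\<^sub>m m" "diagm m (\<lambda>i. 1 / d i) * diagm m d = 1\<^sub>m m"
    by (simp_all add: diagm_mult diagm_one)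
qed

lemma diagonal_diagm: assumes "A \<in> carrier_mat m m" "diagonal_mat A"
  shows "A = diagm m (\<lambda>i. A $$ (i,i))"
  using assms by (intro eq_matI) (auto simp: diagm_def diagonal_mat_def)

lemma col_diagm: "j < m \<Longrightarrow> col (diagm m d) j = d j \<cdot>\<^sub>v unit_vec m j"
  by (intro eq_vecI) (auto simp: diagm_def)



lemma adj_carrier'[simp]: "A \<in> carrier_mat n m \<Longrightarrow> mat_adjoint A \<in> carrier_mat m n"
  using adj_carrier[of A] by auto

theorem proposition2p3:
  fixes n m :: nat
    and A :: "complex mat"
    and f :: "nat \<Rightarrow> complex vec"
    and lam :: "nat \<Rightarrow> complex"
    and U Sig Phi :: "complex mat"
    and b :: "nat \<Rightarrow> complex vec"
  defines "X \<equiv> mat_of_cols n (map f [0..<m])"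
  defines "C \<equiv> companion m (pinv X *\<^sub>v f m)"
  defines "V \<equiv> vandermonde m lam"
  defines "S \<equiv> mat_adjoint U * A * U"
  defines "B \<equiv> mat_of_cols m (map b [0..<m])"
  defines "Z \<equiv> U * B"
  assumes A: "A \<in> carrier_mat n n"
    and f0: "f 0 \<in> carrier_vec n"
    and fS: "\<And>i. i < m \<Longrightarrow> f (Suc i) = A *\<^sub>v f i"
    and fullrank: "vec_space.rank n X = m"
    and lam_eig: "\<And>i. i < m \<Longrightarrow> eigenvalue C (lam i)"
    and lam_distinct: "inj_on lam {..<m}"
    and U: "U \<in> carrier_mat n m" "mat_adjoint U * U = 1\<^sub>m m"
    and Sig: "Sig \<in> carrier_mat m m" "diagonal_mat Sig"
      "\<And>i. i < m \<Longrightarrow> \<exists>s::real. s > 0 \<and> Sig $$ (i,i) = complex_of_real s"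
    and Phi: "Phi \<in> carrier_mat m m" "mat_adjoint Phi * Phi = 1\<^sub>m m"
      "Phi * mat_adjoint Phi = 1\<^sub>m m"
    and svd: "X = U * Sig * mat_adjoint Phi"
    and b: "\<And>j. j < m \<Longrightarrow> b j \<in> carrier_vec m"
      "\<And>j. j < m \<Longrightarrow> S *\<^sub>v b j = lam j \<cdot>\<^sub>v b j"
      "\<And>j. j < m \<Longrightarrow> vnorm2 (b j) = 1"
  shows "\<forall>j<m. vnorm2 (X *\<^sub>v (mat_inv V *\<^sub>v unit_vec m j))
                 = cmod ((pinv Z *\<^sub>v col X 0) $ j)"
proof (cases m)
  case 0 thus ?thesis by simp
next
  case (Suc m')
  note mS = Suc
  have Xc: "X \<in> carrier_mat n m" unfolding X_def by (intro carrier_matI) auto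
  have fc: "j \<le> m \<Longrightarrow> f j \<in> carrier_vec n" for j
  proof (induction j)
    case 0 then show ?case using f0 by simp
  next
    case (Suc j)
    hence "j < m" by simp
    thus ?case using fS[of j] Suc A by simp
  qed
  have colX: "col X j = f j" if "j < m" for j
    unfolding X_def using that fc by (subst col_mat_of_cols) auto
  have Xe: "X *\<^sub>v unit_vec m j = f j" if "j < m" for j
    using mult_unit_vec[OF Xc that] colX[OF that] by simp
  
  define sg where "sg i = Sig $$ (i,i)" for i
  have sg0: "sg i \<noteq> 0" if "i < m" for i
    using Sig(3)[OF that] unfolding sg_def by auto
  have SigD: "Sig = diagm m sg" unfolding sg_def by (rule diagonal_diagm[OF Sig(1,2)])
  define Sinv where "Sinv = diagm m (\<lambda>i. 1 / sg i)"
  have Sinvc: "Sinv \<in> carrier_mat m m" unfolding Sinv_def by simp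
  have SS: "Sig * Sinv = 1\<^sub>m m" "Sinv * Sig = 1\<^sub>m m"
    unfolding SigD Sinv_def using diagm_inv[of m sg] sg0 by auto
  define PhiA where "PhiA = mat_adjoint Phi"
  have PhiAc: "PhiA \<in> carrier_mat m m" unfolding PhiA_def using Phi(1) by simp
  define W where "W = Sig * PhiA"
  define Winv where "Winv = Phi * Sinv"
  have Wc: "W \<in> carrier_mat m m" unfolding W_def using Sig(1) PhiAc by simp
  have Winvc: "Winv \<in> carrier_mat m m" unfolding Winv_def using Phi(1) Sinvc by simp
  have WWinv: "W * Winv = 1\<^sub>m m"
  proof -
    have "W * Winv = Sig * (PhiA * (Phi * Sinv))"
      unfolding W_def Winv_def using assoc_mult_mat[OF Sig(1) PhiAc mult_carrier_mat[OF Phi(1) Sinvc]] by simp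
    also have "PhiA * (Phi * Sinv) = (PhiA * Phi) * Sinv" using assoc_mult_mat[OF PhiAc Phi(1) Sinvc] by simp
    also have "\<dots> = Sinv" using Phi(2) Sinvc unfolding PhiA_def by simp
    finally show ?thesis using SS by simp
  qed
  have WinvW: "Winv * W = 1\<^sub>m m"
  proof -
    have "Winv * W = Phi * (Sinv * (Sig * PhiA))"
      unfolding W_def Winv_def using assoc_mult_mat[OF Phi(1) Sinvc mult_carrier_mat[OF Sig(1) PhiAc]] by simp
    also have "Sinv * (Sig * PhiA) = (Sinv * Sig) * PhiA" using assoc_mult_mat[OF Sinvc Sig(1) PhiAc] by simp
    also have "\<dots> = PhiA" using SS PhiAc by simp
    finally show ?thesis using Phi(3) unfolding PhiA_def by simp
  qed
  have XUW: "X = U * W"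
    unfolding svd W_def PhiA_def[symmetric] using assoc_mult_mat[OF U(1) Sig(1) PhiAc] by simp
  have UXW: "U = X * Winv"
  proof -
    have "X * Winv = U * (W * Winv)" unfolding XUW using assoc_mult_mat[OF U(1) Wc Winvc] by simp
    thus ?thesis using WWinv U(1) by simp
  qed
  define UA where "UA = mat_adjoint U"
  have UAc: "UA \<in> carrier_mat m n" unfolding UA_def using U(1) by simp
  define P where "P = Winv * UA"
  have Pc: "P \<in> carrier_mat m n" unfolding P_def using Winvc UAc by simp
  have PX: "P * X = 1\<^sub>m m"
  proof -
    have "P * X = Winv * (UA * (U * W))" unfolding P_def XUW
      using assoc_mult_mat[OF Winvc UAc mult_carrier_mat[OF U(1) Wc]] by simp
    also have "UA * (U * W) = (UA * U) * W" using assoc_mult_mat[OF UAc U(1) Wc] by simp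
    also have "\<dots> = W" using U(2) Wc unfolding UA_def by simp
    finally show ?thesis using WinvW by simp
  qed
  have XP: "X * P = U * UA"
  proof -
    have "X * P = U * (W * (Winv * UA))" unfolding P_def XUW
      using assoc_mult_mat[OF U(1) Wc mult_carrier_mat[OF Winvc UAc]] by simp
    also have "W * (Winv * UA) = (W * Winv) * UA" using assoc_mult_mat[OF Wc Winvc UAc] by simp
    also have "\<dots> = UA" using WWinv UAc by simp
    finally show ?thesis .
  qed
  have UUA: "mat_adjoint (U * UA) = U * UA"
    using adj_mult[OF U(1) UAc] unfolding UA_def by simp
  have penX: "penrose X P" unfolding penrose_def
  proof (intro conjI)
    show "P \<in> carrier_mat (dim_col X) (dim_row X)" using Pc Xc by simp
    have "X * P * X = X * (P * X)" using assoc_mult_mat[OF Xc Pc Xc] .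
    thus "X * P * X = X" using PX Xc by simp
    show "P * X * P = P" using PX Pc by simp
    show "mat_adjoint (X * P) = X * P" using XP UUA by simp
    show "mat_adjoint (P * X) = P * X" using PX by simp
  qed
  have pinvX: "pinv X = P" by (rule pinv_unique[OF Xc Pc PX penX])
  have Pe: "P *\<^sub>v f j = unit_vec m j" if "j < m" for j
  proof -
    have "P *\<^sub>v f j = P *\<^sub>v (X *\<^sub>v unit_vec m j)" using Xe[OF that] by simp
    also have "\<dots> = (P * X) *\<^sub>v unit_vec m j" using assoc_mult_mat_vec[OF Pc Xc unit_vec_carrier] by simp
    finally show ?thesis using PX by simp
  qed
  have Ceq: "C = P * A * X"
  proof (rule mat_col_eqI)
    fix j assume "j < dim_col (P * A * X)"
    hence j: "j < m" using Xc by simp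
    have PAc: "P * A \<in> carrier_mat m n" using Pc A by simp
    have "col (P * A * X) j = (P * A) *\<^sub>v f j" using col_mult2[OF PAc Xc j] colX[OF j] by simp
    also have "\<dots> = P *\<^sub>v (A *\<^sub>v f j)" using assoc_mult_mat_vec[OF Pc A fc[of j]] j by simp
    also have "\<dots> = P *\<^sub>v f (Suc j)" using fS[OF j] by simp
    finally have c1: "col (P * A * X) j = P *\<^sub>v f (Suc j)" .
    show "col C j = col (P * A * X) j"
    proof (cases "j = m'")
      case True
      show ?thesis unfolding c1 C_def pinvX using True j mS Pc
        by (intro eq_vecI) (auto simp: companion_def)
    next
      case False
      hence "Suc j < m" using j mS by simp
      hence "P *\<^sub>v f (Suc j) = unit_vec m (Suc j)" by (rule Pe)
      thus ?thesis unfolding c1 C_def using False j mS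
        by (intro eq_vecI) (auto simp: companion_def)
    qed
  qed (use Pc A Xc in \<open>auto simp: C_def companion_def\<close>)
  have Cc: "C \<in> carrier_mat m m" unfolding C_def by simp
  have Cv: "C *\<^sub>v y = P *\<^sub>v (A *\<^sub>v (X *\<^sub>v y))" if y: "y \<in> carrier_vec m" for y
  proof -
    have "C *\<^sub>v y = (P * A) *\<^sub>v (X *\<^sub>v y)" unfolding Ceq
      using assoc_mult_mat_vec[OF mult_carrier_mat[OF Pc A] Xc y] .
    also have "\<dots> = P *\<^sub>v (A *\<^sub>v (X *\<^sub>v y))"
      using assoc_mult_mat_vec[OF Pc A mult_mat_vec_carrier[OF Xc y]] .
    finally show ?thesis .
  qed
  have Sc: "S \<in> carrier_mat m m" unfolding S_def by (rule mult_carrier_mat[OF mult_carrier_mat[OF adj_carrier'[OF U(1)] A] U(1)])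
  have Sv: "S *\<^sub>v y = UA *\<^sub>v (A *\<^sub>v (U *\<^sub>v y))" if y: "y \<in> carrier_vec m" for y
  proof -
    have "S *\<^sub>v y = (UA * A) *\<^sub>v (U *\<^sub>v y)" unfolding S_def UA_def[symmetric]
      using assoc_mult_mat_vec[OF mult_carrier_mat[OF UAc A] U(1) y] .
    also have "\<dots> = UA *\<^sub>v (A *\<^sub>v (U *\<^sub>v y))"
      using assoc_mult_mat_vec[OF UAc A mult_mat_vec_carrier[OF U(1) y]] .
    finally show ?thesis .
  qed
  have Ceig: "C *\<^sub>v (Winv *\<^sub>v b j) = lam j \<cdot>\<^sub>v (Winv *\<^sub>v b j)" if j: "j < m" for j
  proof -
    have bj: "b j \<in> carrier_vec m" using b(1)[OF j] .
    have Ub: "U *\<^sub>v b j \<in> carrier_vec n" using U(1) bj by simp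
    have "X *\<^sub>v (Winv *\<^sub>v b j) = (X * Winv) *\<^sub>v b j" using assoc_mult_mat_vec[OF Xc Winvc bj] by simp
    also have "\<dots> = U *\<^sub>v b j" using UXW by simp
    finally have e1: "X *\<^sub>v (Winv *\<^sub>v b j) = U *\<^sub>v b j" .
    have "C *\<^sub>v (Winv *\<^sub>v b j) = P *\<^sub>v (A *\<^sub>v (U *\<^sub>v b j))"
      using Cv[OF mult_mat_vec_carrier[OF Winvc bj]] e1 by simp
    also have "\<dots> = Winv *\<^sub>v (UA *\<^sub>v (A *\<^sub>v (U *\<^sub>v b j)))"
      unfolding P_def using assoc_mult_mat_vec[OF Winvc UAc mult_mat_vec_carrier[OF A Ub]] .
    also have "\<dots> = Winv *\<^sub>v (S *\<^sub>v b j)" using Sv[OF bj] by simp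
    also have "\<dots> = lam j \<cdot>\<^sub>v (Winv *\<^sub>v b j)" using b(2)[OF j] mult_mat_vec[OF Winvc bj] by simp
    finally show ?thesis .
  qed
  
  have Vc: "V \<in> carrier_mat m m" unfolding V_def by simp
  obtain Y where Yc: "Y \<in> carrier_mat m m" and VY: "V * Y = 1\<^sub>m m" and YV: "Y * V = 1\<^sub>m m"
    using vandermonde_invertible[OF lam_distinct] unfolding V_def by blast
  have invV: "mat_inv V = Y" by (rule mat_inv_eq[OF Vc Yc VY YV])
  have VC: "(V *\<^sub>v (C *\<^sub>v y)) $ i = lam i * (V *\<^sub>v y) $ i" if y: "y \<in> carrier_vec m" and i: "i < m" for y i
    using vandermonde_companion[of m' "pinv X *\<^sub>v f m" lam i y] lam_eig[OF i] i y
    unfolding V_def C_def mS by simp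
  have uniq: "v = (V *\<^sub>v v) $ j \<cdot>\<^sub>v col Y j"
    if j: "j < m" and v: "v \<in> carrier_vec m" and ev: "C *\<^sub>v v = lam j \<cdot>\<^sub>v v" for j v
  proof -
    define w where "w = V *\<^sub>v v"
    have wc: "w \<in> carrier_vec m" unfolding w_def using Vc v by simp
    have wi: "w $ i = 0" if i: "i < m" "i \<noteq> j" for i
    proof -
      have "lam i * w $ i = (V *\<^sub>v (C *\<^sub>v v)) $ i" unfolding w_def using VC[OF v i(1)] by simp
      also have "\<dots> = (lam j \<cdot>\<^sub>v w) $ i" unfolding ev w_def using mult_mat_vec[OF Vc v] by simp
      also have "\<dots> = lam j * w $ i" using wc i by simp
      finally have "(lam i - lam j) * w $ i = 0" by (simp add: algebra_simps)
      moreover have "lam i \<noteq> lam j" using lam_distinct i j unfolding inj_on_def by auto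
      ultimately show ?thesis by simp
    qed
    have weq: "w = w $ j \<cdot>\<^sub>v unit_vec m j"
      using wc wi j by (intro eq_vecI) auto
    have "v = (Y * V) *\<^sub>v v" using YV v by simp
    also have "\<dots> = Y *\<^sub>v w" unfolding w_def using assoc_mult_mat_vec[OF Yc Vc v] .
    also have "\<dots> = w $ j \<cdot>\<^sub>v (Y *\<^sub>v unit_vec m j)" using weq mult_mat_vec[OF Yc unit_vec_carrier] by metis
    also have "Y *\<^sub>v unit_vec m j = col Y j" by (rule mult_unit_vec[OF Yc j])
    finally show ?thesis unfolding w_def .
  qed
  define \<beta> where "\<beta> j = (V *\<^sub>v (Winv *\<^sub>v b j)) $ j" for j
  define t where "t j = X *\<^sub>v col Y j" for j
  have colYc: "col Y j \<in> carrier_vec m" for j using Yc by (simp add: col_def carrier_vecI carrier_matD)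
  have bform: "b j = \<beta> j \<cdot>\<^sub>v (W *\<^sub>v col Y j)" if j: "j < m" for j
  proof -
    have bj: "b j \<in> carrier_vec m" using b(1)[OF j] .
    have Wb: "Winv *\<^sub>v b j \<in> carrier_vec m" using Winvc bj by simp
    have "b j = (W * Winv) *\<^sub>v b j" using WWinv bj by simp
    also have "\<dots> = W *\<^sub>v (Winv *\<^sub>v b j)" using assoc_mult_mat_vec[OF Wc Winvc bj] .
    also have "Winv *\<^sub>v b j = \<beta> j \<cdot>\<^sub>v col Y j" unfolding \<beta>_def by (rule uniq[OF j Wb Ceig[OF j]])
    also have "W *\<^sub>v (\<beta> j \<cdot>\<^sub>v col Y j) = \<beta> j \<cdot>\<^sub>v (W *\<^sub>v col Y j)" by (rule mult_mat_vec[OF Wc colYc])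
    finally show ?thesis .
  qed
  have Ub: "U *\<^sub>v b j = \<beta> j \<cdot>\<^sub>v t j" if j: "j < m" for j
  proof -
    have "U *\<^sub>v b j = \<beta> j \<cdot>\<^sub>v (U *\<^sub>v (W *\<^sub>v col Y j))"
      unfolding bform[OF j] using mult_mat_vec[OF U(1) mult_mat_vec_carrier[OF Wc colYc]] .
    also have "U *\<^sub>v (W *\<^sub>v col Y j) = (U * W) *\<^sub>v col Y j" using assoc_mult_mat_vec[OF U(1) Wc colYc] by simp
    finally show ?thesis unfolding t_def XUW .
  qed
  have normt: "cmod (\<beta> j) * vnorm2 (t j) = 1" if j: "j < m" for j
  proof -
    have "1 = vnorm2 (b j)" using b(3)[OF j] by simp
    also have "\<dots> = vnorm2 (U *\<^sub>v b j)" using vnorm2_isometry[OF U b(1)[OF j]] by simp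
    also have "\<dots> = cmod (\<beta> j) * vnorm2 (t j)" unfolding Ub[OF j] vnorm2_smult ..
    finally show ?thesis by simp
  qed
  have \<beta>0: "\<beta> j \<noteq> 0" if "j < m" for j using normt[OF that] by auto
  define D where "D = diagm m \<beta>"
  define Dinv where "Dinv = diagm m (\<lambda>i. 1 / \<beta> i)"
  have Dc: "D \<in> carrier_mat m m" and Dinvc: "Dinv \<in> carrier_mat m m" unfolding D_def Dinv_def by simp_all
  have DD: "D * Dinv = 1\<^sub>m m" "Dinv * D = 1\<^sub>m m" unfolding D_def Dinv_def using diagm_inv[of m \<beta>] \<beta>0 by auto
  define M where "M = Y * D"
  define N where "N = Dinv * V"
  have Mc: "M \<in> carrier_mat m m" unfolding M_def using Yc Dc by simp
  have Nc: "N \<in> carrier_mat m m" unfolding N_def using Dinvc Vc by simp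
  have MN: "M * N = 1\<^sub>m m"
  proof -
    have "M * N = Y * (D * (Dinv * V))" unfolding M_def N_def
      using assoc_mult_mat[OF Yc Dc mult_carrier_mat[OF Dinvc Vc]] .
    also have "D * (Dinv * V) = (D * Dinv) * V" using assoc_mult_mat[OF Dc Dinvc Vc] by simp
    finally show ?thesis using DD YV Vc by simp
  qed
  have NM: "N * M = 1\<^sub>m m"
  proof -
    have "N * M = Dinv * (V * (Y * D))" unfolding M_def N_def
      using assoc_mult_mat[OF Dinvc Vc mult_carrier_mat[OF Yc Dc]] .
    also have "V * (Y * D) = (V * Y) * D" using assoc_mult_mat[OF Vc Yc Dc] by simp
    finally show ?thesis using DD VY Dc by simp
  qed
  have Bc: "B \<in> carrier_mat m m" unfolding B_def by (intro carrier_matI) auto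
  have Zc: "Z \<in> carrier_mat n m" unfolding Z_def using U(1) Bc by simp
  have ZXM: "Z = X * M"
  proof (rule mat_col_eqI)
    fix j assume "j < dim_col (X * M)"
    hence j: "j < m" using Mc by simp
    have "col Z j = U *\<^sub>v col B j" unfolding Z_def using col_mult2[OF U(1) Bc j] .
    also have "col B j = b j" unfolding B_def using j b(1) by (subst col_mat_of_cols) auto
    also have "U *\<^sub>v b j = \<beta> j \<cdot>\<^sub>v t j" by (rule Ub[OF j])
    finally have c1: "col Z j = \<beta> j \<cdot>\<^sub>v t j" .
    have "col (X * M) j = X *\<^sub>v (Y *\<^sub>v col D j)"
      unfolding M_def using col_mult2[OF Xc mult_carrier_mat[OF Yc Dc] j] col_mult2[OF Yc Dc j] by simp
    also have "col D j = \<beta> j \<cdot>\<^sub>v unit_vec m j" unfolding D_def by (rule col_diagm[OF j])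
    also have "Y *\<^sub>v (\<beta> j \<cdot>\<^sub>v unit_vec m j) = \<beta> j \<cdot>\<^sub>v col Y j"
      using mult_mat_vec[OF Yc unit_vec_carrier] mult_unit_vec[OF Yc j] by simp
    also have "X *\<^sub>v (\<beta> j \<cdot>\<^sub>v col Y j) = \<beta> j \<cdot>\<^sub>v t j" unfolding t_def by (rule mult_mat_vec[OF Xc colYc])
    finally show "col Z j = col (X * M) j" using c1 by simp
  qed (use Zc Xc Mc in auto)
  define Q where "Q = N * P"
  have Qc: "Q \<in> carrier_mat m n" unfolding Q_def using Nc Pc by simp
  have QZ: "Q * Z = 1\<^sub>m m"
  proof -
    have "Q * Z = N * (P * (X * M))" unfolding Q_def ZXM
      using assoc_mult_mat[OF Nc Pc mult_carrier_mat[OF Xc Mc]] .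
    also have "P * (X * M) = (P * X) * M" using assoc_mult_mat[OF Pc Xc Mc] by simp
    finally show ?thesis using PX NM Mc by simp
  qed
  have ZQ: "Z * Q = U * UA"
  proof -
    have "Z * Q = X * (M * (N * P))" unfolding Q_def ZXM
      using assoc_mult_mat[OF Xc Mc mult_carrier_mat[OF Nc Pc]] .
    also have "M * (N * P) = (M * N) * P" using assoc_mult_mat[OF Mc Nc Pc] by simp
    finally show ?thesis using MN Pc XP by simp
  qed
  have penZ: "penrose Z Q" unfolding penrose_def
  proof (intro conjI)
    show "Q \<in> carrier_mat (dim_col Z) (dim_row Z)" using Qc Zc by simp
    have "Z * Q * Z = Z * (Q * Z)" using assoc_mult_mat[OF Zc Qc Zc] .
    thus "Z * Q * Z = Z" using QZ Zc by simp
    show "Q * Z * Q = Q" using QZ Qc by simp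
    show "mat_adjoint (Z * Q) = Z * Q" using ZQ UUA by simp
    show "mat_adjoint (Q * Z) = Q * Z" using QZ by simp
  qed
  have pinvZ: "pinv Z = Q" by (rule pinv_unique[OF Zc Qc QZ penZ])
  show ?thesis
  proof (intro allI impI)
    fix j assume j: "j < m"
    have m0: "0 < m" using j by simp
    have "X *\<^sub>v (mat_inv V *\<^sub>v unit_vec m j) = t j"
      unfolding invV t_def using mult_unit_vec[OF Yc j] by simp
    hence lhs: "vnorm2 (X *\<^sub>v (mat_inv V *\<^sub>v unit_vec m j)) = 1 / cmod (\<beta> j)"
      using normt[OF j] \<beta>0[OF j] by (simp add: field_simps)
    have "Q *\<^sub>v col X 0 = N *\<^sub>v (P *\<^sub>v f 0)" unfolding Q_def colX[OF m0]
      using assoc_mult_mat_vec[OF Nc Pc fc[of 0]] by simp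
    also have "P *\<^sub>v f 0 = unit_vec m 0" by (rule Pe[OF m0])
    also have "N *\<^sub>v unit_vec m 0 = Dinv *\<^sub>v (V *\<^sub>v unit_vec m 0)" unfolding N_def
      using assoc_mult_mat_vec[OF Dinvc Vc unit_vec_carrier] .
    also have "V *\<^sub>v unit_vec m 0 = col V 0" by (rule mult_unit_vec[OF Vc m0])
    finally have "(Q *\<^sub>v col X 0) $ j = (Dinv *\<^sub>v col V 0) $ j" by simp
    also have "\<dots> = 1 / \<beta> j * col V 0 $ j" unfolding Dinv_def
      by (rule diagm_mult_vec) (use Vc j in auto)
    also have "col V 0 $ j = 1" using j m0 unfolding V_def vandermonde_def by simp
    finally have "(Q *\<^sub>v col X 0) $ j = 1 / \<beta> j" by simp
    thus "vnorm2 (X *\<^sub>v (mat_inv V *\<^sub>v unit_vec m j)) = cmod ((pinv Z *\<^sub>v col X 0) $ j)"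
      unfolding pinvZ lhs by (simp add: norm_divide)
  qed
qed

end
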